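(* Let $\lambda$ be a finite measure on $\mathcal M$ and $\mathcal R$ a symmetric recombination measure such that $(\mathcal R,\lambda)$ is shattering with constant $\alpha$. Then for all $k\ge1$, $$\int|\mathcal A|^{(\lambda)}_2\,d\mathcal R_k(\mathcal A)\le\frac{\alpha^*}{k+1},\qquad \alpha^*:=\lambda(\mathcal M)^2\vee 2\alpha\lambda(\mathcal M).$$
   Context: $\mathcal M$ is a complete separable metric space. $\mathcal R$ is the law of a random Borel set $R\subseteq\mathcal M$, symmetric in that $R$ and $R^c$ have the same law. $(\mathcal R,\lambda)$ is shattering with constant $\alpha>0$ if $\lambda(A)^3\le 2\alpha\int\lambda(A\cap R)\lambda(A\cap R^c)\,d\mathcal R(R)$ for all Borel $A$ (equivalently $\lambda(A)^3\le\alpha[\lambda(A)^2-2\int\lambda(A\cap R)^2\,d\mathcal R(R)]$). $\mathcal R_k$ is the law of the partition $\{R_1,R_1^c\}\wedge\cdots\wedge\{R_k,R_k^c\}$ (nonempty sets $\tilde R_1\cap\cdots\cap\tilde R_k$, $\tilde R_j\in\{R_j,R_j^c\}$) where $R_1,\dots,R_k$ are i.i.d. with law $\mathcal R$. For a finite partition $\mathcal A=\{A_1,\dots,A_N\}$, $|\mathcal A|^{(\lambda)}_r:=\sum_i\lambda(A_i)^r$. *)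

theory Defs
  imports "HOL-Probability.Probability"
begin

definition refine_partition :: "nat \<Rightarrow> (nat \<Rightarrow> 'a set) \<Rightarrow> 'a set set" where
  "refine_partition k Rs =
     {C. C \<noteq> {} \<and> (\<exists>s::nat \<Rightarrow> bool. C = (\<Inter>j\<in>{..<k}. if s j then Rs j else - Rs j))}"

definition part_norm :: "'a measure \<Rightarrow> nat \<Rightarrow> 'a set set \<Rightarrow> real" where
  "part_norm lam r \<A> = (\<Sum>A\<in>\<A>. measure lam A ^ r)"

definition shattering :: "'a set measure \<Rightarrow> 'a measure \<Rightarrow> real \<Rightarrow> bool" where
  "shattering Rm lam \<alpha> \<longleftrightarrow> \<alpha> > 0 \<and>
     (\<forall>A\<in>sets lam. measure lam A ^ 3 \<le>
        2 * \<alpha> * (\<integral>R. measure lam (A \<inter> R) * measure lam (A \<inter> - R) \<partial>Rm))"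

end

theory Submission
  imports Defs
begin

definition cell :: "nat \<Rightarrow> nat set \<Rightarrow> (nat \<Rightarrow> 'a set) \<Rightarrow> 'a set" where
  "cell k T Rs = (\<Inter>j\<in>{..<k}. if j \<in> T then Rs j else - Rs j)"

lemma cell_Suc_in: "T \<subseteq> {..<k} \<Longrightarrow> cell (Suc k) (insert k T) Rs = cell k T Rs \<inter> Rs k"
  unfolding cell_def lessThan_Suc by auto

lemma cell_Suc_out: "T \<subseteq> {..<k} \<Longrightarrow> cell (Suc k) T Rs = cell k T Rs \<inter> - Rs k"
  unfolding cell_def lessThan_Suc by auto

lemma cell_upd: "cell k T (Rs(k:=R)) = cell k T Rs"
  unfolding cell_def by auto

lemma sum_Pow_Suc:
  "(\<Sum>T\<in>Pow {..<Suc k}. g (cell (Suc k) T Rs)) =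
   (\<Sum>T\<in>Pow {..<k}. g (cell k T Rs \<inter> Rs k) + g (cell k T Rs \<inter> - Rs k))"
proof -
  have inj: "inj_on (insert k) (Pow {..<k})"
    by (rule inj_onI) (metis PowD insert_Diff1 lessThan_iff less_irrefl subsetD
        Diff_insert_absorb)
  have disj: "Pow {..<k} \<inter> insert k ` Pow {..<k} = {}" by auto
  have "(\<Sum>T\<in>Pow {..<Suc k}. g (cell (Suc k) T Rs)) =
     (\<Sum>T\<in>Pow {..<k}. g (cell (Suc k) T Rs)) + (\<Sum>T\<in>insert k ` Pow {..<k}. g (cell (Suc k) T Rs))"
    unfolding lessThan_Suc Pow_insert by (rule sum.union_disjoint) (use disj in auto)
  also have "(\<Sum>T\<in>insert k ` Pow {..<k}. g (cell (Suc k) T Rs)) =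
      (\<Sum>T\<in>Pow {..<k}. g (cell (Suc k) (insert k T) Rs))"
    by (rule sum.reindex[OF inj, unfolded comp_def])
  also have "\<dots> = (\<Sum>T\<in>Pow {..<k}. g (cell k T Rs \<inter> Rs k))"
    by (rule sum.cong) (auto simp: cell_Suc_in)
  also have "(\<Sum>T\<in>Pow {..<k}. g (cell (Suc k) T Rs)) = (\<Sum>T\<in>Pow {..<k}. g (cell k T Rs \<inter> - Rs k))"
    by (rule sum.cong) (auto simp: cell_Suc_out)
  finally show ?thesis by (simp add: sum.distrib add.commute)
qed

lemma refine_eq: "refine_partition k Rs = (\<lambda>T. cell k T Rs) ` {T \<in> Pow {..<k}. cell k T Rs \<noteq> {}}"
proof (intro set_eqI iffI)
  fix C assume "C \<in> refine_partition k Rs"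
  then obtain s where C: "C \<noteq> {}" "C = (\<Inter>j\<in>{..<k}. if s j then Rs j else - Rs j)"
    unfolding refine_partition_def by auto
  have "C = cell k {j\<in>{..<k}. s j} Rs" unfolding C(2) cell_def by (intro INF_cong) auto
  then show "C \<in> (\<lambda>T. cell k T Rs) ` {T \<in> Pow {..<k}. cell k T Rs \<noteq> {}}" using C(1) by auto
next
  fix C assume "C \<in> (\<lambda>T. cell k T Rs) ` {T \<in> Pow {..<k}. cell k T Rs \<noteq> {}}"
  then obtain T where "C = cell k T Rs" "C \<noteq> {}" by auto
  then show "C \<in> refine_partition k Rs" unfolding refine_partition_def cell_def
    by (intro CollectI conjI exI[of _ "\<lambda>j. j \<in> T"]) auto
qed

lemma cell_inj: "inj_on (\<lambda>T. cell k T Rs) {T \<in> Pow {..<k}. cell k T Rs \<noteq> {}}"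
proof (rule inj_onI)
  fix T T' assume T: "T \<in> {T \<in> Pow {..<k}. cell k T Rs \<noteq> {}}" and T': "T' \<in> {T \<in> Pow {..<k}. cell k T Rs \<noteq> {}}"
    and eq: "cell k T Rs = cell k T' Rs"
  then obtain x where x: "x \<in> cell k T Rs" by auto
  then have x': "x \<in> cell k T' Rs" using eq by simp
  show "T = T'"
  proof (intro set_eqI iffI)
    fix j assume "j \<in> T" then have "j < k" "x \<in> Rs j" using T x unfolding cell_def by (auto split: if_splits)
    then show "j \<in> T'" using x' unfolding cell_def by (auto split: if_splits)
  next
    fix j assume "j \<in> T'" then have "j < k" "x \<in> Rs j" using T' x' unfolding cell_def by (auto split: if_splits)
    then show "j \<in> T" using x unfolding cell_def by (auto split: if_splits)
  qed
qed

lemma part_norm_eq: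
  "part_norm lam 2 (refine_partition k Rs) = (\<Sum>T\<in>Pow {..<k}. measure lam (cell k T Rs) ^ 2)"
proof -
  have "part_norm lam 2 (refine_partition k Rs) = (\<Sum>T\<in>{T \<in> Pow {..<k}. cell k T Rs \<noteq> {}}. measure lam (cell k T Rs) ^ 2)"
    unfolding part_norm_def refine_eq by (subst sum.reindex[OF cell_inj]) (simp add: comp_def)
  also have "\<dots> = (\<Sum>T\<in>Pow {..<k}. measure lam (cell k T Rs) ^ 2)"
    by (rule sum.mono_neutral_left) auto
  finally show ?thesis .
qed

lemma cell_sets:
  assumes "space lam = UNIV" "\<And>j. j < k \<Longrightarrow> Rs j \<in> sets lam"
  shows "cell k T Rs \<in> sets lam"
proof (cases "k = 0")
  case True then show ?thesis using sets.top[of lam] assms(1) by (simp add: cell_def)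
next
  case False
  then show ?thesis unfolding cell_def
    by (intro sets.finite_INT) (auto intro: assms(2) sets.compl_sets[of _ lam, unfolded assms(1)]
        simp: Compl_eq_Diff_UNIV assms(1)[symmetric])
qed

lemma sum_cells:
  assumes "finite_measure lam" "space lam = UNIV" "\<And>j. j < k \<Longrightarrow> Rs j \<in> sets lam"
  shows "(\<Sum>T\<in>Pow {..<k}. measure lam (cell k T Rs)) = measure lam (space lam)"
  using assms(3)
proof (induction k)
  case 0 then show ?case by (simp add: cell_def assms(2))
next
  case (Suc k)
  interpret finite_measure lam by fact
  have "(\<Sum>T\<in>Pow {..<Suc k}. measure lam (cell (Suc k) T Rs)) =
     (\<Sum>T\<in>Pow {..<k}. measure lam (cell k T Rs \<inter> Rs k) + measure lam (cell k T Rs \<inter> - Rs k))"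
    by (rule sum_Pow_Suc)
  also have "\<dots> = (\<Sum>T\<in>Pow {..<k}. measure lam (cell k T Rs))"
  proof (rule sum.cong)
    fix T
    have C: "cell k T Rs \<in> sets lam" using cell_sets[OF assms(2)] Suc.prems by auto
    have R: "Rs k \<in> sets lam" using Suc.prems by auto
    have RC: "- Rs k \<in> sets lam" using sets.compl_sets[OF R] assms(2) by (simp add: Compl_eq_Diff_UNIV)
    have "measure lam (cell k T Rs) = measure lam ((cell k T Rs \<inter> Rs k) \<union> (cell k T Rs \<inter> - Rs k))"
      by (rule arg_cong[where f="measure lam"]) blast
    also have "\<dots> = measure lam (cell k T Rs \<inter> Rs k) + measure lam (cell k T Rs \<inter> - Rs k)"
      by (rule finite_measure_Union) (use C R RC in auto)
    finally show "measure lam (cell k T Rs \<inter> Rs k) + measure lam (cell k T Rs \<inter> - Rs k) = measure lam (cell k T Rs)" by simp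
  qed simp
  also have "\<dots> = measure lam (space lam)" using Suc by auto
  finally show ?case .
qed

lemma cs_sum:
  fixes a :: "'i \<Rightarrow> real"
  assumes "finite I" "\<And>i. i \<in> I \<Longrightarrow> 0 \<le> a i"
  shows "(\<Sum>i\<in>I. a i ^ 2) ^ 2 \<le> (\<Sum>i\<in>I. a i) * (\<Sum>i\<in>I. a i ^ 3)"
proof -
  have e1: "(\<Sum>i\<in>I. a i) * (\<Sum>i\<in>I. a i ^ 3) = (\<Sum>i\<in>I. \<Sum>j\<in>I. a i * a j ^ 3)"
    by (rule sum_product)
  have e2: "(\<Sum>i\<in>I. a i) * (\<Sum>i\<in>I. a i ^ 3) = (\<Sum>i\<in>I. \<Sum>j\<in>I. a j * a i ^ 3)"
    by (subst e1, rule sum.swap)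
  have e3: "(\<Sum>i\<in>I. a i ^ 2) ^ 2 = (\<Sum>i\<in>I. \<Sum>j\<in>I. a i ^ 2 * a j ^ 2)"
    by (simp add: power2_eq_square[of "sum _ _"] sum_product)
  have "0 \<le> (\<Sum>i\<in>I. \<Sum>j\<in>I. a i * a j * (a i - a j) ^ 2)"
    using assms(2) by (intro sum_nonneg) auto
  also have "\<dots> = (\<Sum>i\<in>I. \<Sum>j\<in>I. a i * a j ^ 3) + (\<Sum>i\<in>I. \<Sum>j\<in>I. a j * a i ^ 3)
      - 2 * (\<Sum>i\<in>I. \<Sum>j\<in>I. a i ^ 2 * a j ^ 2)"
    by (simp add: sum.distrib sum_subtractf sum_distrib_left power2_eq_square power3_eq_cube algebra_simps)
  finally show ?thesis using e1 e2 e3 by linarith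
qed

lemma meas_measure:
  assumes fin: "finite_measure lam" and sl: "sets lam = sets borel"
    and P: "Measurable.pred (N \<Otimes>\<^sub>M borel) (\<lambda>p. P (fst p) (snd p))"
  shows "(\<lambda>n. measure lam {x. P n x}) \<in> borel_measurable N"
proof -
  interpret finite_measure lam by fact
  have sp: "space lam = UNIV" using sets_eq_imp_space_eq[OF sl] by simp
  have ss: "sets (N \<Otimes>\<^sub>M lam) = sets (N \<Otimes>\<^sub>M borel)" by (rule sets_pair_measure_cong[OF refl sl])
  define Q where "Q = {p \<in> space (N \<Otimes>\<^sub>M lam). P (fst p) (snd p)}"
  have "Q \<in> sets (N \<Otimes>\<^sub>M lam)"
    using P unfolding Q_def ss sets_eq_imp_space_eq[OF ss] by (simp add: Measurable.pred_def)
  from measurable_emeasure_Pair[OF this]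
  have "(\<lambda>n. emeasure lam (Pair n -` Q)) \<in> borel_measurable N" .
  moreover have "\<And>n. n \<in> space N \<Longrightarrow> Pair n -` Q = {x. P n x}"
    by (auto simp: Q_def space_pair_measure sp)
  ultimately have "(\<lambda>n. emeasure lam {x. P n x}) \<in> borel_measurable N"
    using measurable_cong[of N "\<lambda>n. emeasure lam (Pair n -` Q)" "\<lambda>n. emeasure lam {x. P n x}"] by auto
  then show ?thesis unfolding measure_def by (rule borel_measurable_enn2real)
qed

lemma arith_step:
  fixes x y b c :: real and n :: nat
  assumes b: "b > 0" and c: "c \<ge> 2 * b" and x0: "0 \<le> x" and xc: "x \<le> c / (n + 1)"
    and y: "y \<le> x - x^2 / b"
  shows "y \<le> c / (n + 2)"
proof -
  define N where "N = real n + 1"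
  have N: "N \<ge> 1" by (simp add: N_def)
  have n2: "real n + 2 = N + 1" by (simp add: N_def)
  have gmax: "x - x^2/b \<le> b/4"
  proof -
    have "0 \<le> (x - b/2)^2 / b" using b by simp
    also have "(x - b/2)^2 / b = b/4 - (x - x^2/b)" using b by (simp add: field_simps power2_eq_square)
    finally show ?thesis by simp
  qed
  define u where "u = c / N"
  have xu: "x \<le> u" using xc by (simp add: u_def N_def add.commute)
  have cu: "c = u * N" using N by (simp add: u_def)
  have u0: "u \<ge> 0" using c b N by (simp add: u_def)
  show ?thesis
  proof (cases "u \<ge> b / 2")
    case True
    have "b/4 \<le> u * N / (N + 1)"
    proof -
      have "N / (N+1) \<ge> 1/2" using N by (simp add: field_simps)
      then have "u * (N / (N+1)) \<ge> (b/2) * (1/2)" using True b N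
        by (intro mult_mono) auto
      then show ?thesis by simp
    qed
    moreover have "c / real (n+2) = u * N / (N+1)" using n2 cu by simp
    ultimately show ?thesis using y gmax by linarith
  next
    case False
    have "(u - x) * (1 - (u + x) / b) \<ge> 0" using False xu x0 b by (intro mult_nonneg_nonneg) (auto simp: field_simps)
    moreover have "u - u^2/b - (x - x^2/b) = (u - x) * (1 - (u + x) / b)" using b by (simp add: field_simps power2_eq_square)
    ultimately have "x - x^2/b \<le> u - u^2/b" by linarith
    also have "u - u^2/b \<le> c/(n+2)"
    proof -
      have "b \<le> u * (N + 1)" proof -
        have "u \<ge> 0" using c b N by (simp add: u_def)
        then show ?thesis using c b by (simp add: cu algebra_simps)
      qed
      then have h: "1 / (N+1) \<le> u / b" using b N by (simp add: field_simps)
      have "u - u^2/b = u * (1 - u/b)" by (simp add: power2_eq_square right_diff_distrib)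
      also have "\<dots> \<le> u * (1 - 1/(N+1))" using h False b u0
        by (intro mult_left_mono) auto
      also have "\<dots> = c / (n+2)" using N by (simp add: n2 cu field_simps)
      finally show ?thesis .
    qed
    finally show ?thesis using y by linarith
  qed
qed
locale shat =
  fixes lam :: "'a::polish_space measure" and Rm :: "'a set measure" and \<alpha> :: real
  assumes lam_borel: "sets lam = sets borel"
    and lam_fin: "finite_measure lam"
    and Rm_prob: "prob_space Rm"
    and Rm_borel: "\<forall>S\<in>space Rm. S \<in> sets borel"
    and Rm_joint: "{(S, x). x \<in> S} \<inter> (space Rm \<times> UNIV) \<in> sets (Rm \<Otimes>\<^sub>M borel)"
    and shatter: "shattering Rm lam \<alpha>"
begin

interpretation L: finite_measure lam by (rule lam_fin)
interpretation R: prob_space Rm by (rule Rm_prob)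

lemma sp: "space lam = UNIV" using sets_eq_imp_space_eq[OF lam_borel] by simp

lemma alpha_pos: "\<alpha> > 0" using shatter by (simp add: shattering_def)

lemma joint_pred: "Measurable.pred (Rm \<Otimes>\<^sub>M borel) (\<lambda>p. snd p \<in> fst p)"
proof -
  have "{p \<in> space (Rm \<Otimes>\<^sub>M borel). snd p \<in> fst p} = {(S, x). x \<in> S} \<inter> (space Rm \<times> UNIV)"
    by (auto simp: space_pair_measure)
  then show ?thesis using Rm_joint by (simp add: Measurable.pred_def)
qed

lemma memb_pred:
  assumes f: "f \<in> N \<rightarrow>\<^sub>M Rm"
  shows "Measurable.pred (N \<Otimes>\<^sub>M borel) (\<lambda>p. snd p \<in> f (fst p))"
proof -
  have "(\<lambda>p. (f (fst p), snd p)) \<in> N \<Otimes>\<^sub>M borel \<rightarrow>\<^sub>M Rm \<Otimes>\<^sub>M borel"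
    using f by measurable
  from measurable_compose[OF this joint_pred] show ?thesis by (simp add: comp_def)
qed

lemma cell_pred:
  "Measurable.pred (Pi\<^sub>M {..<k} (\<lambda>_. Rm) \<Otimes>\<^sub>M borel) (\<lambda>p. snd p \<in> cell k T (fst p))"
proof -
  have eq: "(\<lambda>p. snd p \<in> cell k T (fst p)) =
     (\<lambda>p. \<forall>j\<in>{..<k}. (j \<in> T \<longrightarrow> snd p \<in> fst p j) \<and> (j \<notin> T \<longrightarrow> \<not> snd p \<in> fst p j))"
    by (auto simp: cell_def fun_eq_iff)
  have m: "Measurable.pred (Pi\<^sub>M {..<k} (\<lambda>_. Rm) \<Otimes>\<^sub>M borel) (\<lambda>p. snd p \<in> fst p j)" if "j < k" for j
    using memb_pred[of "\<lambda>Rs. Rs j" "Pi\<^sub>M {..<k} (\<lambda>_. Rm)"] that by simp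
  show ?thesis unfolding eq
    by (intro pred_intros_finite(3) pred_intros_logic) (auto intro: m)
qed

lemma cell_meas: "(\<lambda>Rs. measure lam (cell k T Rs)) \<in> borel_measurable (Pi\<^sub>M {..<k} (\<lambda>_. Rm))"
  using meas_measure[OF lam_fin lam_borel cell_pred[of k T]] by simp

definition F :: "nat \<Rightarrow> (nat \<Rightarrow> 'a set) \<Rightarrow> real" where
  "F k Rs = (\<Sum>T\<in>Pow {..<k}. measure lam (cell k T Rs) ^ 2)"

lemma F_meas: "F k \<in> borel_measurable (Pi\<^sub>M {..<k} (\<lambda>_. Rm))"
  unfolding F_def using cell_meas by measurable

lemma F_nonneg: "F k Rs \<ge> 0" unfolding F_def by (intro sum_nonneg) auto

lemma F_bound: "F k Rs \<le> card (Pow {..<k::nat}) * measure lam (space lam) ^ 2"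
proof -
  have "F k Rs \<le> (\<Sum>T\<in>Pow {..<k}. measure lam (space lam) ^ 2)"
    unfolding F_def by (intro sum_mono power_mono L.bounded_measure) auto
  then show ?thesis by simp
qed

lemma F_int: "integrable (Pi\<^sub>M {..<k} (\<lambda>_. Rm)) (F k)"
proof -
  interpret P: prob_space "Pi\<^sub>M {..<k} (\<lambda>_. Rm)" by (rule prob_space_PiM) (rule Rm_prob)
  show ?thesis
    by (rule P.integrable_const_bound[where B="card (Pow {..<k::nat}) * measure lam (space lam) ^ 2"])
       (use F_nonneg F_bound F_meas in auto)
qed

lemma F2_int: "integrable (Pi\<^sub>M {..<k} (\<lambda>_. Rm)) (\<lambda>Rs. F k Rs ^ 2)"
proof -
  interpret P: prob_space "Pi\<^sub>M {..<k} (\<lambda>_. Rm)" by (rule prob_space_PiM) (rule Rm_prob)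
  show ?thesis
    by (rule P.integrable_const_bound[where B="(card (Pow {..<k::nat}) * measure lam (space lam) ^ 2)^2"])
       (use F_nonneg F_bound F_meas in \<open>auto intro!: power_mono\<close>)
qed

lemma inner_meas:
  assumes A: "A \<in> sets lam"
  shows "(\<lambda>R. measure lam (A \<inter> R)) \<in> borel_measurable Rm"
    "(\<lambda>R. measure lam (A \<inter> - R)) \<in> borel_measurable Rm"
proof -
  have Ab[measurable]: "A \<in> sets borel" using A lam_borel by simp
  have jp: "Measurable.pred (Rm \<Otimes>\<^sub>M borel) (\<lambda>p. snd p \<in> fst p)" by (rule joint_pred)
  have p1: "Measurable.pred (Rm \<Otimes>\<^sub>M borel) (\<lambda>p. snd p \<in> A \<and> snd p \<in> fst p)"
    using jp by measurable
  have p2: "Measurable.pred (Rm \<Otimes>\<^sub>M borel) (\<lambda>p. snd p \<in> A \<and> \<not> snd p \<in> fst p)"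
    using jp by measurable
  have e1: "\<And>R. {x. x \<in> A \<and> x \<in> R} = A \<inter> R" by auto
  have e2: "\<And>R. {x. x \<in> A \<and> x \<notin> R} = A \<inter> - R" by auto
  show "(\<lambda>R. measure lam (A \<inter> R)) \<in> borel_measurable Rm"
    using meas_measure[OF lam_fin lam_borel p1] unfolding e1 by simp
  show "(\<lambda>R. measure lam (A \<inter> - R)) \<in> borel_measurable Rm"
    using meas_measure[OF lam_fin lam_borel p2] unfolding e2 by simp
qed

lemma inner_int:
  assumes A: "A \<in> sets lam"
  shows "integrable Rm (\<lambda>R. measure lam (A \<inter> R) ^ 2 + measure lam (A \<inter> - R) ^ 2)"
    and "integrable Rm (\<lambda>R. measure lam (A \<inter> R) * measure lam (A \<inter> - R))"
proof -
  note m = inner_meas[OF A]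
  let ?m = "measure lam (space lam)"
  have b: "measure lam B \<le> ?m" for B by (rule L.bounded_measure)
  have h: "measure lam B ^ 2 \<le> ?m^2" for B by (rule power_mono[OF b]) simp
  have hh: "measure lam (A \<inter> R) ^ 2 + measure lam (A \<inter> - R) ^ 2 \<le> 2 * ?m^2" for R
    using h[of "A \<inter> R"] h[of "A \<inter> - R"] by linarith
  show "integrable Rm (\<lambda>R. measure lam (A \<inter> R) ^ 2 + measure lam (A \<inter> - R) ^ 2)"
    by (rule R.integrable_const_bound[where B="2 * ?m^2"])
       (use m hh in \<open>auto intro!: AE_I2\<close>)
  show "integrable Rm (\<lambda>R. measure lam (A \<inter> R) * measure lam (A \<inter> - R))"
    by (rule R.integrable_const_bound[where B="?m * ?m"])
       (use m in \<open>auto intro!: AE_I2 mult_mono b\<close>)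
qed

lemma inner_bound:
  assumes A: "A \<in> sets lam"
  shows "(\<integral>R. measure lam (A \<inter> R) ^ 2 + measure lam (A \<inter> - R) ^ 2 \<partial>Rm)
     \<le> measure lam A ^ 2 - measure lam A ^ 3 / \<alpha>"
proof -
  let ?a = "\<lambda>R. measure lam (A \<inter> R)" and ?b = "\<lambda>R. measure lam (A \<inter> - R)"
  have split: "?a R + ?b R = measure lam A" if R: "R \<in> space Rm" for R
  proof -
    have Rs: "R \<in> sets lam" using R Rm_borel lam_borel by auto
    have Rc: "- R \<in> sets lam" using sets.compl_sets[OF Rs] sp by (simp add: Compl_eq_Diff_UNIV)
    have "measure lam A = measure lam ((A \<inter> R) \<union> (A \<inter> - R))"
      by (rule arg_cong[where f="measure lam"]) blast
    also have "\<dots> = ?a R + ?b R"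
      by (rule L.finite_measure_Union) (use A Rs Rc in auto)
    finally show ?thesis by simp
  qed
  have "(\<integral>R. ?a R ^ 2 + ?b R ^ 2 \<partial>Rm) = (\<integral>R. measure lam A ^ 2 - 2 * (?a R * ?b R) \<partial>Rm)"
  proof (rule Bochner_Integration.integral_cong[OF refl])
    fix R assume "R \<in> space Rm"
    from split[OF this] have "measure lam A ^ 2 = (?a R + ?b R)^2" by simp
    then show "?a R ^ 2 + ?b R ^ 2 = measure lam A ^ 2 - 2 * (?a R * ?b R)"
      by (simp add: power2_eq_square algebra_simps)
  qed
  also have "\<dots> = measure lam A ^ 2 - 2 * (\<integral>R. ?a R * ?b R \<partial>Rm)"
    using inner_int(2)[OF A] by (simp add: R.prob_space)
  also have "\<dots> \<le> measure lam A ^ 2 - measure lam A ^ 3 / \<alpha>"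
  proof -
    have "measure lam A ^ 3 \<le> 2 * \<alpha> * (\<integral>R. ?a R * ?b R \<partial>Rm)"
      using shatter A by (auto simp: shattering_def)
    then have "measure lam A ^ 3 / \<alpha> \<le> 2 * (\<integral>R. ?a R * ?b R \<partial>Rm)"
      using alpha_pos by (simp add: divide_le_eq mult.commute mult.left_commute)
    then show ?thesis by linarith
  qed
  finally show ?thesis .
qed

lemma space_cells:
  assumes "Rs \<in> space (Pi\<^sub>M {..<k} (\<lambda>_. Rm))"
  shows "cell k T Rs \<in> sets lam" and "\<And>j. j < k \<Longrightarrow> Rs j \<in> sets lam"
proof -
  show j: "\<And>j. j < k \<Longrightarrow> Rs j \<in> sets lam"
    using assms Rm_borel lam_borel by (auto simp: space_PiM PiE_def Pi_def)
  show "cell k T Rs \<in> sets lam" by (rule cell_sets[OF sp j])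
qed

lemma pointwise:
  assumes Rs: "Rs \<in> space (Pi\<^sub>M {..<k} (\<lambda>_. Rm))"
  defines "m \<equiv> measure lam (space lam)"
  shows "(\<integral>\<^sup>+R. ennreal (F (Suc k) (Rs(k:=R))) \<partial>Rm) \<le> ennreal (F k Rs - F k Rs ^ 2 / (\<alpha> * m))"
    and "0 \<le> F k Rs - F k Rs ^ 2 / (\<alpha> * m)"
proof -
  define C where "C T = cell k T Rs" for T
  define a where "a T = measure lam (C T)" for T
  define g where "g T R = measure lam (C T \<inter> R) ^ 2 + measure lam (C T \<inter> - R) ^ 2" for T R
  have Cs: "C T \<in> sets lam" for T unfolding C_def by (rule space_cells(1)[OF Rs])
  have eqF: "F (Suc k) (Rs(k:=R)) = (\<Sum>T\<in>Pow {..<k}. g T R)" for R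
    unfolding F_def g_def C_def
    using sum_Pow_Suc[of "\<lambda>X. measure lam X ^ 2" k "Rs(k:=R)"] by (simp add: cell_upd)
  have int: "integrable Rm (\<lambda>R. \<Sum>T\<in>Pow {..<k}. g T R)"
    unfolding g_def by (intro Bochner_Integration.integrable_sum inner_int(1) Cs)
  have nn: "(\<integral>\<^sup>+R. ennreal (F (Suc k) (Rs(k:=R))) \<partial>Rm) = ennreal (\<integral>R. (\<Sum>T\<in>Pow {..<k}. g T R) \<partial>Rm)"
    unfolding eqF by (rule nn_integral_eq_integral[OF int]) (auto intro!: AE_I2 sum_nonneg simp: g_def)
  have I: "(\<integral>R. (\<Sum>T\<in>Pow {..<k}. g T R) \<partial>Rm) = (\<Sum>T\<in>Pow {..<k}. \<integral>R. g T R \<partial>Rm)"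
    unfolding g_def by (intro Bochner_Integration.integral_sum inner_int(1) Cs)
  have I0: "0 \<le> (\<Sum>T\<in>Pow {..<k}. \<integral>R. g T R \<partial>Rm)"
    by (intro sum_nonneg integral_nonneg_AE AE_I2) (simp add: g_def)
  have "(\<Sum>T\<in>Pow {..<k}. \<integral>R. g T R \<partial>Rm) \<le> (\<Sum>T\<in>Pow {..<k}. a T ^ 2 - a T ^ 3 / \<alpha>)"
    unfolding g_def a_def by (intro sum_mono inner_bound Cs)
  also have "\<dots> = F k Rs - (\<Sum>T\<in>Pow {..<k}. a T ^ 3) / \<alpha>"
    by (simp add: sum_subtractf sum_divide_distrib F_def a_def C_def)
  also have "\<dots> \<le> F k Rs - F k Rs ^ 2 / (\<alpha> * m)"
  proof -
    have sa: "(\<Sum>T\<in>Pow {..<k}. a T) = m"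
      unfolding a_def C_def m_def by (rule sum_cells[OF lam_fin sp space_cells(2)[OF Rs]])
    have Fa: "F k Rs = (\<Sum>T\<in>Pow {..<k}. a T ^ 2)" by (simp add: F_def a_def C_def)
    have cs: "F k Rs ^ 2 \<le> m * (\<Sum>T\<in>Pow {..<k}. a T ^ 3)"
      unfolding Fa sa[symmetric] by (rule cs_sum) (auto simp: a_def)
    have s3: "0 \<le> (\<Sum>T\<in>Pow {..<k}. a T ^ 3)" by (intro sum_nonneg) (simp add: a_def)
    have "F k Rs ^ 2 / (\<alpha> * m) \<le> (\<Sum>T\<in>Pow {..<k}. a T ^ 3) / \<alpha>"
    proof (cases "m = 0")
      case True then show ?thesis using s3 alpha_pos by simp
    next
      case False
      then have mpos: "m > 0" using measure_nonneg[of lam "space lam"] unfolding m_def by linarith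
      have "F k Rs ^ 2 / (\<alpha> * m) \<le> (m * (\<Sum>T\<in>Pow {..<k}. a T ^ 3)) / (\<alpha> * m)"
        using cs mpos alpha_pos by (intro divide_right_mono) auto
      also have "\<dots> = (\<Sum>T\<in>Pow {..<k}. a T ^ 3) / \<alpha>" using mpos by simp
      finally show ?thesis .
    qed
    then show ?thesis by linarith
  qed
  finally have le: "(\<Sum>T\<in>Pow {..<k}. \<integral>R. g T R \<partial>Rm) \<le> F k Rs - F k Rs ^ 2 / (\<alpha> * m)" .
  show "(\<integral>\<^sup>+R. ennreal (F (Suc k) (Rs(k:=R))) \<partial>Rm) \<le> ennreal (F k Rs - F k Rs ^ 2 / (\<alpha> * m))"
    unfolding nn I using le by (rule ennreal_leI)
  show "0 \<le> F k Rs - F k Rs ^ 2 / (\<alpha> * m)" using le I0 by linarith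
qed

definition fk :: "nat \<Rightarrow> real" where
  "fk k = (\<integral>Rs. F k Rs \<partial>(Pi\<^sub>M {..<k} (\<lambda>_. Rm)))"

lemma fk_nn: "(\<integral>\<^sup>+Rs. ennreal (F k Rs) \<partial>(Pi\<^sub>M {..<k} (\<lambda>_. Rm))) = ennreal (fk k)"
  unfolding fk_def by (rule nn_integral_eq_integral[OF F_int]) (auto intro!: AE_I2 F_nonneg)

lemma fk_nonneg: "0 \<le> fk k"
  unfolding fk_def by (intro integral_nonneg_AE AE_I2 F_nonneg)

lemma fk_0: "fk 0 = measure lam (space lam) ^ 2"
proof -
  interpret P: prob_space "Pi\<^sub>M {..<0::nat} (\<lambda>_. Rm)" by (rule prob_space_PiM) (rule Rm_prob)
  have "F 0 Rs = measure lam (space lam) ^ 2" for Rs by (simp add: F_def cell_def sp)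
  then show ?thesis using P.prob_space by (simp add: fk_def)
qed

lemma fk_step:
  defines "m \<equiv> measure lam (space lam)"
  shows "fk (Suc k) \<le> fk k - fk k ^ 2 / (\<alpha> * m)"
proof -
  interpret PS: product_sigma_finite "\<lambda>_::nat. Rm"
    by (simp add: product_sigma_finite_def prob_space_imp_sigma_finite[OF Rm_prob])
  interpret P: prob_space "Pi\<^sub>M {..<k} (\<lambda>_. Rm)" by (rule prob_space_PiM) (rule Rm_prob)
  define H where "H Rs = F k Rs - F k Rs ^ 2 / (\<alpha> * m)" for Rs
  have Hnn: "0 \<le> H Rs" if "Rs \<in> space (Pi\<^sub>M {..<k} (\<lambda>_. Rm))" for Rs
    unfolding H_def m_def by (rule pointwise(2)[OF that])
  have Hint: "integrable (Pi\<^sub>M {..<k} (\<lambda>_. Rm)) H"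
    unfolding H_def using F_int F2_int by auto
  have "ennreal (fk (Suc k)) = (\<integral>\<^sup>+Rs. ennreal (F (Suc k) Rs) \<partial>(Pi\<^sub>M (insert k {..<k}) (\<lambda>_. Rm)))"
    using fk_nn[of "Suc k"] by (simp add: lessThan_Suc)
  also have "\<dots> = (\<integral>\<^sup>+Rs. (\<integral>\<^sup>+R. ennreal (F (Suc k) (Rs(k:=R))) \<partial>Rm) \<partial>(Pi\<^sub>M {..<k} (\<lambda>_. Rm)))"
  proof (rule PS.product_nn_integral_insert)
    show "(\<lambda>Rs. ennreal (F (Suc k) Rs)) \<in> borel_measurable (Pi\<^sub>M (insert k {..<k}) (\<lambda>_. Rm))"
      using F_meas[of "Suc k"] by (simp add: lessThan_Suc)
  qed auto
  also have "\<dots> \<le> (\<integral>\<^sup>+Rs. ennreal (H Rs) \<partial>(Pi\<^sub>M {..<k} (\<lambda>_. Rm)))"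
    by (intro nn_integral_mono) (unfold H_def m_def, rule pointwise(1))
  also have "\<dots> = ennreal (\<integral>Rs. H Rs \<partial>(Pi\<^sub>M {..<k} (\<lambda>_. Rm)))"
    by (rule nn_integral_eq_integral[OF Hint]) (use Hnn in \<open>auto intro!: AE_I2\<close>)
  finally have le1: "ennreal (fk (Suc k)) \<le> ennreal (\<integral>Rs. H Rs \<partial>(Pi\<^sub>M {..<k} (\<lambda>_. Rm)))" .
  have H0: "0 \<le> (\<integral>Rs. H Rs \<partial>(Pi\<^sub>M {..<k} (\<lambda>_. Rm)))"
    by (intro integral_nonneg_AE AE_I2) (use Hnn in auto)
  have le2: "fk (Suc k) \<le> (\<integral>Rs. H Rs \<partial>(Pi\<^sub>M {..<k} (\<lambda>_. Rm)))"
    using le1 H0 by simp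
  have "(\<integral>Rs. H Rs \<partial>(Pi\<^sub>M {..<k} (\<lambda>_. Rm))) = fk k - (\<integral>Rs. F k Rs ^ 2 \<partial>(Pi\<^sub>M {..<k} (\<lambda>_. Rm))) / (\<alpha> * m)"
    unfolding H_def fk_def using F_int F2_int by simp
  also have "\<dots> \<le> fk k - fk k ^ 2 / (\<alpha> * m)"
  proof -
    have "P.variance (F k) = (\<integral>Rs. F k Rs ^ 2 \<partial>(Pi\<^sub>M {..<k} (\<lambda>_. Rm))) - fk k ^ 2"
      unfolding fk_def by (rule P.variance_eq[OF F_int F2_int])
    with P.variance_positive[of "F k"] have "fk k ^ 2 \<le> (\<integral>Rs. F k Rs ^ 2 \<partial>(Pi\<^sub>M {..<k} (\<lambda>_. Rm)))" by linarith
    moreover have "0 \<le> \<alpha> * m" using alpha_pos by (simp add: m_def)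
    ultimately have "fk k ^ 2 / (\<alpha> * m) \<le> (\<integral>Rs. F k Rs ^ 2 \<partial>(Pi\<^sub>M {..<k} (\<lambda>_. Rm))) / (\<alpha> * m)"
      by (rule divide_right_mono)
    then show ?thesis by linarith
  qed
  finally show ?thesis using le2 by linarith
qed

lemma fk_bound:
  defines "m \<equiv> measure lam (space lam)"
  shows "fk k \<le> max (m^2) (2 * \<alpha> * m) / (real k + 1)"
proof (induction k)
  case 0 then show ?case by (simp add: fk_0 m_def)
next
  case (Suc k)
  have m0: "0 \<le> m" by (simp add: m_def)
  show ?case
  proof (cases "m = 0")
    case True
    have "fk (Suc k) \<le> fk k" using fk_step[of k] True by (simp add: m_def)
    with Suc True show ?thesis by simp
  next
    case False
    then have mp: "m > 0" using m0 by simp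
    have "fk (Suc k) \<le> max (m^2) (2 * \<alpha> * m) / real (k + 2)"
      by (rule arith_step[where b="\<alpha> * m" and x="fk k"])
         (use mp alpha_pos fk_nonneg Suc fk_step[of k] in \<open>auto simp: m_def add.commute\<close>)
    then show ?thesis by (simp add: add.commute)
  qed
qed

end
theorem lemma7p1:
  fixes lam :: "'a::polish_space measure"
    and Rm :: "'a set measure"
    and \<alpha> :: real and k :: nat
  assumes lam_borel: "sets lam = sets borel"
    and lam_fin: "finite_measure lam"
    and Rm_prob: "prob_space Rm"
    and Rm_borel: "\<forall>S\<in>space Rm. S \<in> sets borel"
    and Rm_joint: "{(S, x). x \<in> S} \<inter> (space Rm \<times> UNIV) \<in> sets (Rm \<Otimes>\<^sub>M borel)"
    and compl_meas: "(\<lambda>S. - S) \<in> Rm \<rightarrow>\<^sub>M Rm"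
    and symmetric: "distr Rm Rm (\<lambda>S. - S) = Rm"
    and shatter: "shattering Rm lam \<alpha>"
    and k: "k \<ge> 1"
  shows "(\<integral>\<^sup>+Rs. ennreal (part_norm lam 2 (refine_partition k Rs))
            \<partial>(\<Pi>\<^sub>M j\<in>{..<k}. Rm))
         \<le> ennreal (max ((measure lam (space lam))\<^sup>2) (2 * \<alpha> * measure lam (space lam))
                    / (real k + 1))"
proof -
  interpret S: shat lam Rm \<alpha>
    by (rule shat.intro[OF lam_borel lam_fin Rm_prob Rm_borel Rm_joint shatter])
  have "(\<integral>\<^sup>+Rs. ennreal (part_norm lam 2 (refine_partition k Rs)) \<partial>(\<Pi>\<^sub>M j\<in>{..<k}. Rm))
      = (\<integral>\<^sup>+Rs. ennreal (S.F k Rs) \<partial>(\<Pi>\<^sub>M j\<in>{..<k}. Rm))"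
    by (rule nn_integral_cong) (simp only: part_norm_eq S.F_def)
  also have "\<dots> = ennreal (S.fk k)" by (rule S.fk_nn)
  also have "\<dots> \<le> ennreal (max ((measure lam (space lam))\<^sup>2) (2 * \<alpha> * measure lam (space lam))
                    / (real k + 1))"
    by (rule ennreal_leI) (rule S.fk_bound)
  finally show ?thesis .
qed

end
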